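(* Let $n\ge1$, $\Theta\neq0$ a complex skew-symmetric $n\times n$ matrix, $\Gamma$ a discrete subgroup of $\mathrm{Aut}(\mathcal H,J_\Theta)$ and $p\in\mathcal H$. Consider all points $(q^0,0')$ with $q^0\in i\mathbb R$ (finite boundary points of $\mathcal H$ on the $z^0$-axis) that arise as limits $\lim_{\nu\to\infty}\phi_\nu(p)$ for sequences $(\phi_\nu)$ of pairwise distinct elements of $\Gamma$. Then there is at most one such point; i.e. the set of accumulation points of the orbit $\Gamma\cdot p$ lying in $\partial\mathcal H\cap(\mathbb C\times\{0'\})$ has at most one element (the only other possible accumulation point on the $z^0$-axis being the point at infinity $(\infty,0')$).
   Context: Write points of $\mathbb C^{n+1}$ as $z=(z^0,z')$, $z'=(z^1,\dots,z^n)$. $\mathcal H=\{(z^0,z')\in\mathbb C\times\mathbb C^n:\ \mathrm{Re}\,z^0+\|z'\|^2<0\}$. For a complex skew-symmetric $n\times n$ matrix $\Theta=(\Theta_{\alpha\beta})$, $J_\Theta$ is the almost complex structure on $\mathbb C^{n+1}$ $J_\Theta=i\frac{\partial}{\partial z^0}\otimes dz^0+\sum_\alpha\big(i\frac{\partial}{\partial z^\alpha}+2\sum_\beta\Theta_{\alpha\beta}z^\beta\frac{\partial}{\partial \bar z^0}\big)\otimes dz^\alpha-i\frac{\partial}{\partial \bar z^0}\otimes d\bar z^0+\sum_\alpha\big(-i\frac{\partial}{\partial \bar z^\alpha}+2\sum_\beta\overline{\Theta_{\alpha\beta}}\bar z^\beta\frac{\partial}{\partial z^0}\big)\otimes d\bar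 z^\alpha$. $\mathrm{Aut}(\mathcal H,J_\Theta)$ is the group of $J_\Theta$-holomorphic diffeomorphisms of $\mathcal H$ with compact-open topology. $U_\Theta=\{A\in\mathbb C^{n\times n}: A^t\bar A=I,\ A^t\Theta A=\Theta\}$. For $w'\in\mathbb C^n$, $h_{w'}(z')=-\|w'\|^2-2\langle z',\bar w'\rangle+i\big(\sum\Theta_{\alpha\beta}z^\alpha w^\beta+\sum\overline{\Theta_{\alpha\beta}}\,\bar z^\alpha\bar w^\beta\big)$, with $\langle z',\bar w'\rangle=\sum_\alpha z^\alpha\bar w^\alpha$. It is known (and may be assumed) that for $\Theta\neq0$ every $\phi\in\mathrm{Aut}(\mathcal H,J_\Theta)$ can be written uniquely as $\phi(z)=(tz^0+h_{w'}(z')+is,\ t^{1/2}Az'+w')$ with $t>0$, $s\in\mathbb R$, $w'\in\mathbb C^n$, $A\in U_\Theta$, and every such map is an automorphism. *)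

theory Defs
  imports "HOL-Analysis.Analysis"
begin

text \<open>Points of C^(n+1) are pairs (z0, z') with z' :: complex^'n; the index type 'n
  (finite, hence nonempty) encodes n \<ge> 1.\<close>

type_synonym 'n pt = "complex \<times> (complex ^ 'n)"

definition siegel_H :: "'n::finite pt set" where
  "siegel_H = {(z0, z'). Re z0 + (\<Sum>a\<in>UNIV. (cmod (z' $ a))\<^sup>2) < 0}"

definition skew :: "complex ^ 'n ^ 'n \<Rightarrow> bool" where
  "skew \<Theta> \<longleftrightarrow> transpose \<Theta> = - \<Theta>"

definition U_Theta :: "complex ^ 'n::finite ^ 'n \<Rightarrow> (complex ^ 'n ^ 'n) set" where
  "U_Theta \<Theta> = {A. transpose A ** (\<chi> i j. cnj (A $ i $ j)) = mat 1
                     \<and> transpose A ** \<Theta> ** A = \<Theta>}"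

definition h_w :: "complex ^ 'n::finite ^ 'n \<Rightarrow> complex ^ 'n \<Rightarrow> complex ^ 'n \<Rightarrow> complex" where
  "h_w \<Theta> w z' =
     - of_real (\<Sum>a\<in>UNIV. (cmod (w $ a))\<^sup>2)
     - 2 * (\<Sum>a\<in>UNIV. z' $ a * cnj (w $ a))
     + \<i> * ((\<Sum>a\<in>UNIV. \<Sum>b\<in>UNIV. \<Theta> $ a $ b * z' $ a * w $ b)
           + (\<Sum>a\<in>UNIV. \<Sum>b\<in>UNIV. cnj (\<Theta> $ a $ b) * cnj (z' $ a) * cnj (w $ b)))"

text \<open>Aut(H, J_Theta) for Theta \<noteq> 0, via the (assumed) explicit parametrization.\<close>
definition Aut_H :: "complex ^ 'n::finite ^ 'n \<Rightarrow> ('n pt \<Rightarrow> 'n pt) set" where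
  "Aut_H \<Theta> = {\<phi>. \<exists>t s w A. t > 0 \<and> A \<in> U_Theta \<Theta> \<and>
      \<phi> = (\<lambda>(z0, z'). (of_real t * z0 + h_w \<Theta> w z' + \<i> * of_real s,
                         of_real (sqrt t) *s (A *v z') + w))}"

definition co_open :: "('n::finite pt \<Rightarrow> 'n pt) set \<Rightarrow> bool" where
  "co_open W \<longleftrightarrow> generate_topology
      {{f. f ` K \<subseteq> U} | K U. compact K \<and> K \<subseteq> siegel_H \<and> open U} W"

definition subgroup_Aut :: "complex ^ 'n::finite ^ 'n \<Rightarrow> ('n pt \<Rightarrow> 'n pt) set \<Rightarrow> bool" where
  "subgroup_Aut \<Theta> G \<longleftrightarrow> G \<subseteq> Aut_H \<Theta> \<and> id \<in> G
     \<and> (\<forall>\<phi>\<in>G. \<forall>\<psi>\<in>G. \<exists>g\<in>G. \<forall>z\<in>siegel_H. g z = \<phi> (\<psi> z))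
     \<and> (\<forall>\<phi>\<in>G. \<exists>\<psi>\<in>G. \<forall>z\<in>siegel_H. \<psi> (\<phi> z) = z \<and> \<phi> (\<psi> z) = z)"

definition discrete_subgroup :: "complex ^ 'n::finite ^ 'n \<Rightarrow> ('n pt \<Rightarrow> 'n pt) set \<Rightarrow> bool" where
  "discrete_subgroup \<Theta> G \<longleftrightarrow> subgroup_Aut \<Theta> G
     \<and> (\<forall>\<phi>\<in>G. \<exists>W. co_open W \<and> W \<inter> G = {\<phi>})"

end

theory Submission
  imports Defs
begin


definition cstar :: "complex^'n^'m \<Rightarrow> complex^'m^'n" where
  "cstar A = (\<chi> i j. cnj (A $ j $ i))"
definition unitary :: "complex^'n^'n \<Rightarrow> bool" where
  "unitary A \<longleftrightarrow> cstar A ** A = mat 1 \<and> A ** cstar A = mat 1"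
definition cinner :: "complex^'n \<Rightarrow> complex^'n \<Rightarrow> complex" where
  "cinner x y = (\<Sum>i\<in>UNIV. x$i * cnj (y$i))"

lemma inner_cinner: "x \<bullet> y = Re (cinner x y)"
  unfolding inner_vec_def cinner_def inner_complex_def by (simp add: Re_sum)

lemma cinner_adj: "cinner (A *v x) y = cinner x (cstar A *v y)"
proof -
  have "cinner (A *v x) y = (\<Sum>i\<in>UNIV. \<Sum>j\<in>UNIV. A$i$j * x$j * cnj (y$i))"
    by (simp add: cinner_def matrix_vector_mult_def sum_distrib_right)
  also have "\<dots> = (\<Sum>j\<in>UNIV. \<Sum>i\<in>UNIV. A$i$j * x$j * cnj (y$i))"
    by (rule sum.swap)
  also have "\<dots> = cinner x (cstar A *v y)"
    by (simp add: cinner_def matrix_vector_mult_def cstar_def sum_distrib_left cnj_sum mult_ac)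
  finally show ?thesis .
qed

lemma unitary_norm: assumes "unitary A" shows "norm (A *v x) = norm x"
proof -
  have "(norm (A *v x))^2 = Re (cinner (A *v x) (A *v x))"
    by (simp add: power2_norm_eq_inner inner_cinner)
  also have "\<dots> = Re (cinner x ((cstar A ** A) *v x))"
    by (simp add: cinner_adj matrix_vector_mul_assoc)
  also have "\<dots> = (norm x)^2" using assms
    by (simp add: unitary_def power2_norm_eq_inner inner_cinner)
  finally show ?thesis by (simp add: power2_eq_iff_nonneg)
qed

lemma U_unitary: assumes "A \<in> U_Theta \<Theta>" shows "unitary A"
proof -
  have e: "transpose A ** (\<chi> i j. cnj (A $ i $ j)) = mat 1" using assms by (simp add: U_Theta_def)
  have "cstar A ** A = (\<chi> i j. cnj ((transpose A ** (\<chi> i j. cnj (A $ i $ j))) $ i $ j))"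
    by (simp add: vec_eq_iff cstar_def matrix_matrix_mult_def transpose_def cnj_sum mult.commute)
  also have "\<dots> = mat 1" by (simp add: e vec_eq_iff mat_def)
  finally have 1: "cstar A ** A = mat 1" .
  then have "A ** cstar A = mat 1" using matrix_left_right_inverse by blast
  with 1 show ?thesis by (simp add: unitary_def)
qed

lemma cstar_cstar[simp]: "cstar (cstar A) = A" by (simp add: cstar_def vec_eq_iff)

lemma cstar_mult: "cstar (A ** B) = cstar B ** cstar A"
  by (simp add: cstar_def vec_eq_iff matrix_matrix_mult_def cnj_sum mult.commute)

lemma unitary_cstar: "unitary A \<Longrightarrow> unitary (cstar A)"
  by (simp add: unitary_def)

lemma unitary_mult: "unitary A \<Longrightarrow> unitary B \<Longrightarrow> unitary (A ** B)"
  by (simp add: unitary_def cstar_mult matrix_mul_assoc)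
     (metis matrix_mul_assoc matrix_mul_lid matrix_mul_rid)


lemma normsq: "(norm (v::complex^'n))^2 = (\<Sum>a\<in>UNIV. (cmod (v$a))^2)"
  by (simp add: norm_vec_def L2_set_def sum_nonneg)

lemma H_iff: "z \<in> siegel_H \<longleftrightarrow> Re (fst z) + (norm (snd z))^2 < 0"
  by (cases z) (simp add: siegel_H_def normsq)

lemma Re_h: "Re (h_w \<Theta> w z') = - ((norm w)^2) - 2 * (z' \<bullet> w)"
proof -
  let ?X = "(\<Sum>a\<in>UNIV. \<Sum>b\<in>UNIV. \<Theta> $ a $ b * z' $ a * w $ b)"
  have Y: "(\<Sum>a\<in>UNIV. \<Sum>b\<in>UNIV. cnj (\<Theta> $ a $ b) * cnj (z' $ a) * cnj (w $ b)) = cnj ?X"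
    by (simp only: cnj_sum complex_cnj_mult)
  have "Re (\<i> * (?X + cnj ?X)) = 0" by (subst complex_add_cnj) simp
  moreover have "Re (\<Sum>a\<in>UNIV. z' $ a * cnj (w $ a)) = z' \<bullet> w"
    using inner_cinner[of z' w] by (simp add: cinner_def)
  ultimately show ?thesis
    unfolding h_w_def Y by (simp add: normsq)
qed

lemma h_w0[simp]: "h_w \<Theta> 0 z' = 0"
  by (simp add: h_w_def)

definition Fa :: "complex^'n^'n \<Rightarrow> real \<Rightarrow> real \<Rightarrow> complex^'n \<Rightarrow> complex^'n^'n \<Rightarrow> 'n::finite pt \<Rightarrow> 'n pt" where
  "Fa \<Theta> t s w A = (\<lambda>(z0, z'). (of_real t * z0 + h_w \<Theta> w z' + \<i> * of_real s,
                         of_real (sqrt t) *s (A *v z') + w))"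

definition Fm :: "real \<Rightarrow> real \<Rightarrow> complex^'n^'n \<Rightarrow> 'n::finite pt \<Rightarrow> 'n pt" where
  "Fm t s A = (\<lambda>(z0, z'). (of_real t * z0 + \<i> * of_real s, of_real (sqrt t) *s (A *v z')))"

lemma Fa0: "Fa \<Theta> t s 0 A = Fm t s A"
  by (simp add: Fa_def Fm_def)

lemma ofreal_smult: "(of_real r *s (v::complex^'n)) = r *\<^sub>R v"
  unfolding vec_eq_iff
  apply (rule allI)
  apply simp
  apply (simp add: scaleR_conv_of_real)
  done

lemma mv_scaleR: "(A::complex^'n^'m) *v (r *\<^sub>R v) = r *\<^sub>R (A *v v)"
  by (simp add: vec_eq_iff matrix_vector_mult_def scaleR_sum_right)

lemma Re_fst_Fa: "Re (fst (Fa \<Theta> t s w A (z0, v))) = t * Re z0 - ((norm w)^2) - 2 * (v \<bullet> w)"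
  by (simp add: Fa_def Re_h)

lemma snd_Fa: "snd (Fa \<Theta> t s w A (z0, v)) = sqrt t *\<^sub>R (A *v v) + w"
  by (simp add: Fa_def ofreal_smult)

lemma Fm_simp: "Fm t s A (z0, v) = (of_real t * z0 + \<i> * of_real s, sqrt t *\<^sub>R (A *v v))"
  by (simp add: Fm_def ofreal_smult)

lemma Fm_H: assumes "t > 0" "unitary A" "z \<in> siegel_H" shows "Fm t s A z \<in> siegel_H"
proof (cases z)
  case (Pair z0 v)
  have "Re z0 + (norm v)^2 < 0" using assms(3) Pair by (simp add: H_iff)
  then have "t * (Re z0 + (norm v)^2) < 0" using assms(1) by (simp add: mult_pos_neg)
  moreover have "(norm (sqrt t *\<^sub>R (A *v v)))^2 = t * (norm v)^2"
    using assms(1,2) by (simp add: unitary_norm power_mult_distrib)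
  ultimately show ?thesis using Pair by (simp add: H_iff Fm_simp algebra_simps)
qed

lemma Fm_comp: assumes "t1 > 0" "t2 > 0"
  shows "Fm t1 s1 A1 (Fm t2 s2 A2 z) = Fm (t1*t2) (t1 * s2 + s1) (A1**A2) z"
  using assms
  by (cases z) (simp add: Fm_simp mv_scaleR matrix_vector_mul_assoc real_sqrt_mult algebra_simps)

lemma Fm_id: "Fm 1 0 (mat 1) z = z"
  by (cases z) (simp add: Fm_simp)

lemma Fm_inv1: assumes "t > 0" "unitary A" shows "Fm (1/t) (-s/t) (cstar A) (Fm t s A z) = z"
  using assms by (simp add: Fm_comp unitary_def Fm_id)

lemma Fm_inv2: assumes "t > 0" "unitary A" shows "Fm t s A (Fm (1/t) (-s/t) (cstar A) z) = z"
  using assms by (simp add: Fm_comp unitary_def Fm_id)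


definition R :: "('n::finite pt \<Rightarrow> 'n pt) \<Rightarrow> real \<Rightarrow> real \<Rightarrow> complex^'n^'n \<Rightarrow> bool" where
  "R g t s A \<longleftrightarrow> t > 0 \<and> unitary A \<and> (\<forall>z\<in>siegel_H. g z = Fm t s A z)"

lemma G1:
  fixes \<Gamma> :: "('n::finite pt \<Rightarrow> 'n pt) set"
  assumes "subgroup_Aut \<Theta> \<Gamma>" "g1\<in>\<Gamma>" "g2\<in>\<Gamma>" "R g1 t1 s1 A1" "R g2 t2 s2 A2"
    "t = t1 * t2" "s = t1 * s2 + s1" "A = A1 ** A2"
  shows "\<exists>g\<in>\<Gamma>. R g t s A"
proof -
  obtain g where g: "g\<in>\<Gamma>" "\<forall>z\<in>siegel_H. g z = g1 (g2 z)"
    using assms(1-3) unfolding subgroup_Aut_def by blast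
  have "\<forall>z\<in>siegel_H. g z = Fm t s A z"
  proof
    fix z :: "'n pt" assume z: "z \<in> siegel_H"
    have "g2 z = Fm t2 s2 A2 z" "Fm t2 s2 A2 z \<in> siegel_H"
      using assms(5) z Fm_H[of t2 A2 z s2] by (auto simp: R_def)
    then show "g z = Fm t s A z" using g z assms(4,5,6,7,8) by (simp add: R_def Fm_comp)
  qed
  moreover have "t > 0" "unitary A" using assms(4-8) by (auto simp: R_def unitary_mult)
  ultimately show ?thesis using g(1) by (auto simp: R_def)
qed

lemma G2:
  fixes \<Gamma> :: "('n::finite pt \<Rightarrow> 'n pt) set"
  assumes "subgroup_Aut \<Theta> \<Gamma>" "g\<in>\<Gamma>" "R g t s A"
  shows "\<exists>\<psi>\<in>\<Gamma>. R \<psi> (1/t) (-s/t) (cstar A)"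
proof -
  obtain \<psi> where p: "\<psi>\<in>\<Gamma>" "\<forall>z\<in>siegel_H. \<psi> (g z) = z \<and> g (\<psi> z) = z"
    using assms(1,2) unfolding subgroup_Aut_def by blast
  have tA: "t > 0" "unitary A" using assms(3) by (auto simp: R_def)
  have "\<forall>y\<in>siegel_H. \<psi> y = Fm (1/t) (-s/t) (cstar A) y"
  proof
    fix y :: "'n pt" assume y: "y \<in> siegel_H"
    let ?x = "Fm (1/t) (-s/t) (cstar A) y"
    have x: "?x \<in> siegel_H" using Fm_H[of "1/t" "cstar A" y] tA y unitary_cstar by auto
    have "g ?x = y" using assms(3) x Fm_inv2[OF tA] by (simp add: R_def)
    then show "\<psi> y = ?x" using p x by metis
  qed
  then show ?thesis using p(1) tA unitary_cstar by (auto simp: R_def)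
qed

lemma G3:
  fixes \<Gamma> :: "('n::finite pt \<Rightarrow> 'n pt) set"
  assumes "subgroup_Aut \<Theta> \<Gamma>" "\<phi>\<in>\<Gamma>" "g\<in>\<Gamma>" "R \<phi> t s A" "R g \<tau> \<sigma> B"
    "s' = (1-\<tau>) * s + t * \<sigma>" "A' = A ** B ** cstar A"
  shows "\<exists>c\<in>\<Gamma>. R c \<tau> s' A'"
proof -
  have t: "t > 0" using assms(4) by (simp add: R_def)
  obtain \<psi> where p: "\<psi>\<in>\<Gamma>" "R \<psi> (1/t) (-s/t) (cstar A)" using G2 assms(1,2,4) by blast
  obtain g1 where g1: "g1\<in>\<Gamma>" "R g1 (\<tau> * (1/t)) (\<tau> * (-s/t) + \<sigma>) (B ** cstar A)"
    using G1[OF assms(1,3) p(1) assms(5) p(2)] by blast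
  have "\<tau> = t * (\<tau> * (1/t))" using t by simp
  moreover have "s' = t * (\<tau> * (-s/t) + \<sigma>) + s" using t unfolding assms(6) by (simp add: field_simps)
  moreover have "A' = A ** (B ** cstar A)" using assms(7) by (simp add: matrix_mul_assoc)
  ultimately show ?thesis using G1[OF assms(1,2) g1(1) assms(4) g1(2)] by blast
qed

lemma Aut_obtain:
  assumes "\<phi> \<in> Aut_H \<Theta>"
  obtains t s w A where "t > 0" "unitary A" "\<phi> = Fa \<Theta> t s w A"
  using assms U_unitary unfolding Aut_H_def Fa_def by blast

lemma TW0:
  assumes t: "t>0" "t'>0" and A: "unitary A" "unitary A'"
    and inv: "\<forall>z\<in>siegel_H. Fa \<Theta> t' s' w' A' (Fa \<Theta> t s w A z) = z"
  shows "w' = - (sqrt t' *\<^sub>R (A' *v w)) \<and> t * t' = 1 \<and> (w = 0 \<or> t' \<le> 1)"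
proof -
  have eq: "t' * (t * x - (norm w)^2 - 2*(v \<bullet> w)) - (norm w')^2 - 2*((sqrt t *\<^sub>R (A *v v) + w) \<bullet> w') = x
       \<and> sqrt t' *\<^sub>R (A' *v (sqrt t *\<^sub>R (A *v v) + w)) + w' = v"
    if xv: "x + (norm v)^2 < 0" for x v
  proof -
    let ?z = "(complex_of_real x, v)"
    have z: "?z \<in> siegel_H" using xv by (simp add: H_iff)
    let ?y = "Fa \<Theta> t s w A ?z"
    have e: "Fa \<Theta> t' s' w' A' (fst ?y, snd ?y) = ?z" using inv z by simp
    have "Re (fst (Fa \<Theta> t' s' w' A' (fst ?y, snd ?y))) = x" using e by simp
    moreover have "snd (Fa \<Theta> t' s' w' A' (fst ?y, snd ?y)) = v" using e by simp
    moreover have "Re (fst ?y) = t * x - (norm w)^2 - 2*(v \<bullet> w)"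
      using Re_fst_Fa[of \<Theta> t s w A "complex_of_real x" v] by simp
    moreover have "snd ?y = sqrt t *\<^sub>R (A *v v) + w"
      using snd_Fa[of \<Theta> t s w A "complex_of_real x" v] by simp
    ultimately show ?thesis by (simp only: Re_fst_Fa snd_Fa)
  qed
  have e1: "t' * (t * (-1) - (norm w)^2 - 2*(0 \<bullet> w)) - (norm w')^2 - 2*((sqrt t *\<^sub>R (A *v 0) + w) \<bullet> w') = -1
       \<and> sqrt t' *\<^sub>R (A' *v (sqrt t *\<^sub>R (A *v 0) + w)) + w' = 0"
    using eq[of "-1" 0] by simp
  have e2: "t' * (t * (-2) - (norm w)^2 - 2*(0 \<bullet> w)) - (norm w')^2 - 2*((sqrt t *\<^sub>R (A *v 0) + w) \<bullet> w') = -2"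
    using eq[of "-2" 0] by simp
  have w': "w' = - (sqrt t' *\<^sub>R (A' *v w))" using e1
    by (simp add: matrix_vector_mult_0_right) (metis add.commute add_eq_0_iff2 neg_equal_iff_equal)
  have tt: "t * t' = 1" using e1 e2 by (simp add: matrix_vector_mult_0_right algebra_simps)
  have st: "sqrt t * sqrt t' = 1" using tt by (metis real_sqrt_mult real_sqrt_one)
  define \<epsilon> where "\<epsilon> = 1 / (1 + norm w)"
  have nw: "0 \<le> norm w" by simp
  have ep: "\<epsilon> > 0" "\<epsilon> * norm w < 1" 
  proof -
    have p: "1 + norm w > 0" using nw by linarith
    show "\<epsilon> > 0" unfolding \<epsilon>_def using p by simp
    show "\<epsilon> * norm w < 1" unfolding \<epsilon>_def using p by (simp add: divide_less_eq)
  qed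
  have "(norm (\<epsilon> *\<^sub>R w))^2 < 1"
  proof -
    have "norm (\<epsilon> *\<^sub>R w) < 1" using ep by simp
    then show ?thesis by (simp add: power_less_one_iff abs_less_iff)
  qed
  then have e3: "t' * (t * (-1) - (norm w)^2 - 2*((\<epsilon> *\<^sub>R w) \<bullet> w)) - (norm w')^2
      - 2*((sqrt t *\<^sub>R (A *v (\<epsilon> *\<^sub>R w)) + w) \<bullet> w') = -1"
    using eq[of "-1" "\<epsilon> *\<^sub>R w"] by simp
  have i1: "(\<epsilon> *\<^sub>R w) \<bullet> w = \<epsilon> * (norm w)^2" by (simp add: power2_norm_eq_inner)
  define a where "a = (A *v w) \<bullet> (A' *v w)"
  have i2: "(A *v (\<epsilon> *\<^sub>R w)) \<bullet> w' = - (\<epsilon> * sqrt t' * a)"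
    by (simp add: w' mv_scaleR a_def)
  have e1': "t' * (t*(-1) - (norm w)^2) - (norm w')^2 - 2*(w \<bullet> w') = -1"
    using e1 by (simp add: matrix_vector_mult_0_right)
  have e3': "t' * (t*(-1) - (norm w)^2 - 2*(\<epsilon>*(norm w)^2)) - (norm w')^2
      - 2*(sqrt t * (-(\<epsilon> * sqrt t' * a)) + w \<bullet> w') = -1"
    using e3 by (simp only: inner_add_left inner_scaleR_left i2 power2_norm_eq_inner)
  have "t' * (\<epsilon> * (norm w)^2) = \<epsilon> * (sqrt t * sqrt t') * a"
    using e1' e3' by algebra
  then have key: "t' * (\<epsilon> * (norm w)^2) = \<epsilon> * ((A *v w) \<bullet> (A' *v w))"
    using st by (simp add: a_def)
  have cs: "(A *v w) \<bullet> (A' *v w) \<le> (norm w)^2"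
    using Cauchy_Schwarz_ineq2[of "A *v w" "A' *v w"] A
    by (simp add: unitary_norm power2_eq_square)
  have "\<epsilon> * (t' * (norm w)^2) \<le> \<epsilon> * (norm w)^2" using key cs ep(1)
    by (simp add: algebra_simps mult_left_mono)
  then have "t' * (norm w)^2 \<le> (norm w)^2" using ep(1) by simp
  then have "w = 0 \<or> t' \<le> 1" by (cases "w = 0") auto
  with w' tt show ?thesis by simp
qed


lemma TW:
  fixes \<Gamma> :: "('n::finite pt \<Rightarrow> 'n pt) set"
  assumes "subgroup_Aut \<Theta> \<Gamma>" "\<phi>\<in>\<Gamma>" "t > 0" "unitary A" "\<phi> = Fa \<Theta> t s w A" "t \<noteq> 1"
  shows "w = 0"
proof (rule ccontr)
  assume w: "w \<noteq> 0"
  obtain \<psi> where p: "\<psi>\<in>\<Gamma>" "\<forall>z\<in>siegel_H. \<psi> (\<phi> z) = z \<and> \<phi> (\<psi> z) = z"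
    using assms(1,2) unfolding subgroup_Aut_def by blast
  have "\<psi> \<in> Aut_H \<Theta>" using p(1) assms(1) unfolding subgroup_Aut_def by blast
  then obtain t' s' w' A' where q: "t' > 0" "unitary A'" "\<psi> = Fa \<Theta> t' s' w' A'"
    by (rule Aut_obtain)
  have r1: "w' = - (sqrt t' *\<^sub>R (A' *v w)) \<and> t * t' = 1 \<and> (w = 0 \<or> t' \<le> 1)"
    using TW0[of t t' A A' \<Theta> s' w' s w] assms q p by simp
  have r2: "w = - (sqrt t *\<^sub>R (A *v w')) \<and> t' * t = 1 \<and> (w' = 0 \<or> t \<le> 1)"
    using TW0[of t' t A' A \<Theta> s w s' w'] assms q p by simp
  have "w' \<noteq> 0" using r2 w by auto
  then have "t \<le> 1" using r2 by simp
  moreover have "t' \<le> 1" using r1 w by simp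
  moreover have "t * t' = 1" using r1 by simp
  ultimately have "t = 1" using assms(3) q(1)
    by (metis mult.right_neutral mult_left_mono order_antisym order_less_imp_le)
  with assms(6) show False by simp
qed

lemma CO:
  fixes f :: "nat \<Rightarrow> ('n::finite pt \<Rightarrow> 'n pt)"
  assumes "co_open W" "id \<in> W"
    and conv: "\<And>K e. compact K \<Longrightarrow> K \<subseteq> siegel_H \<Longrightarrow> e > 0 \<Longrightarrow>
                 eventually (\<lambda>\<nu>. \<forall>x\<in>K. dist (f \<nu> x) x < e) sequentially"
  shows "eventually (\<lambda>\<nu>. f \<nu> \<in> W) sequentially"
proof -
  let ?S = "{{f. f ` K \<subseteq> U} | K U. compact K \<and> K \<subseteq> (siegel_H :: 'n pt set) \<and> open U}"
  have "generate_topology ?S W" using assms(1) by (simp add: co_open_def)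
  then have "id \<in> W \<longrightarrow> eventually (\<lambda>\<nu>. f \<nu> \<in> W) sequentially"
  proof (induction rule: generate_topology.induct)
    case UNIV
    then show ?case by simp
  next
    case (Int a b)
    then show ?case by (auto intro: eventually_conj)
  next
    case (UN K)
    show ?case
    proof
      assume "id \<in> \<Union>K"
      then obtain k where "k \<in> K" "id \<in> k" by blast
      then have "eventually (\<lambda>\<nu>. f \<nu> \<in> k) sequentially" using UN.IH by blast
      then show "eventually (\<lambda>\<nu>. f \<nu> \<in> \<Union>K) sequentially"
        by (rule eventually_mono) (use \<open>k \<in> K\<close> in blast)
    qed
  next
    case (Basis s)
    then obtain K U where KU: "s = {f. f ` K \<subseteq> U}" "compact K" "K \<subseteq> siegel_H" "open U" by blast
    show ?case
    proof
      assume "id \<in> s"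
      then have "K \<subseteq> U" using KU by simp
      then obtain e where e: "e > 0" "(\<Union>x\<in>K. ball x e) \<subseteq> U"
        using compact_subset_open_imp_ball_epsilon_subset[OF KU(2) KU(4)] by blast
      have "eventually (\<lambda>\<nu>. \<forall>x\<in>K. dist (f \<nu> x) x < e) sequentially"
        using conv[OF KU(2,3) e(1)] .
      then show "eventually (\<lambda>\<nu>. f \<nu> \<in> s) sequentially"
      proof (rule eventually_mono)
        fix \<nu> assume a: "\<forall>x\<in>K. dist (f \<nu> x) x < e"
        have "f \<nu> x \<in> U" if "x \<in> K" for x
        proof -
          have "f \<nu> x \<in> ball x e" using a that by (simp add: dist_commute)
          then show ?thesis using e(2) that by blast
        qed
        then show "f \<nu> \<in> s" using KU(1) by blast
      qed
    qed
  qed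
  then show ?thesis using assms(2) by blast
qed

lemma norm_l1: "norm (x::complex^'n) \<le> (\<Sum>i\<in>UNIV. norm (x$i))"
  unfolding norm_vec_def by (rule L2_set_le_sum) simp

lemma MV: "norm ((M::complex^'n^'n) *v x) \<le> real (CARD('n))^2 * norm M * norm x"
proof -
  have c: "norm ((M *v x)$i) \<le> real CARD('n) * (norm M * norm x)" for i
  proof -
    have "norm ((M *v x)$i) = norm (\<Sum>j\<in>UNIV. M$i$j * x$j)"
      by (simp add: matrix_vector_mult_def)
    also have "\<dots> \<le> (\<Sum>j\<in>UNIV. norm (M$i$j * x$j))" by (rule norm_sum)
    also have "\<dots> \<le> (\<Sum>j\<in>(UNIV::'n set). norm M * norm x)"
    proof (rule sum_mono)
      fix j :: 'n
      have "norm (M$i$j) \<le> norm M" using Finite_Cartesian_Product.norm_nth_le[where x="M$i" and i=j] Finite_Cartesian_Product.norm_nth_le[where x=M and i=i] by linarith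
      moreover have "norm (x$j) \<le> norm x" by (rule Finite_Cartesian_Product.norm_nth_le)
      ultimately show "norm (M$i$j * x$j) \<le> norm M * norm x"
        by (simp add: norm_mult mult_mono)
    qed
    also have "\<dots> = real CARD('n) * (norm M * norm x)" by simp
    finally show ?thesis .
  qed
  have "norm (M *v x) \<le> (\<Sum>i\<in>UNIV. norm ((M *v x)$i))" by (rule norm_l1)
  also have "\<dots> \<le> (\<Sum>i\<in>(UNIV::'n set). real CARD('n) * (norm M * norm x))"
    by (rule sum_mono) (rule c)
  also have "\<dots> = real (CARD('n))^2 * norm M * norm x" by (simp add: power2_eq_square)
  finally show ?thesis .
qed

lemma unitary_bound: assumes "unitary (A::complex^'n^'n)" shows "norm A \<le> real CARD('n)"
proof -
  have r: "norm (A$i) = 1" for i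
  proof -
    have "cinner (A$i) (A$i) = (A ** cstar A)$i$i"
      by (simp add: cinner_def matrix_matrix_mult_def cstar_def)
    also have "\<dots> = 1" using assms by (simp add: unitary_def mat_def)
    finally have "(norm (A$i))^2 = 1" by (simp add: power2_norm_eq_inner inner_cinner)
    then show ?thesis using norm_ge_zero[of "A$i"] by (auto simp: power2_eq_1_iff)
  qed
  have "norm A \<le> (\<Sum>i\<in>UNIV. norm (A$i))" unfolding norm_vec_def by (rule L2_set_le_sum) simp
  also have "\<dots> = real CARD('n)" by (simp add: r)
  finally show ?thesis .
qed

lemma dist_pair_le: "dist (a, b) (c, d) \<le> dist a c + dist b d"
  unfolding dist_Pair_Pair by (rule sqrt_sum_squares_le_sum) auto

lemma BND:
  assumes "unitary A1" "unitary (A2::complex^'n^'n)" "\<tau> > 0" "norm z \<le> r"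
  shows "dist (Fm \<tau> \<sigma> (cstar A1 ** A2) z) z
     \<le> \<bar>\<tau> - 1\<bar> * r + \<bar>\<sigma>\<bar> + \<bar>sqrt \<tau> - 1\<bar> * r + real (CARD('n))^2 * norm (A2 - A1) * r"
proof (cases z)
  case (Pair z0 v)
  have z0: "norm z0 \<le> r" and v: "norm v \<le> r" using assms(4) Pair norm_fst_le[of z0 v] norm_snd_le[of v z0]
    by auto
  have d1: "dist (of_real \<tau> * z0 + \<i> * of_real \<sigma>) z0 \<le> \<bar>\<tau> - 1\<bar> * r + \<bar>\<sigma>\<bar>"
  proof -
    have "dist (of_real \<tau> * z0 + \<i> * of_real \<sigma>) z0 = norm (of_real (\<tau> - 1) * z0 + \<i> * of_real \<sigma>)"
      by (simp add: dist_norm algebra_simps)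
    also have "\<dots> \<le> norm (of_real (\<tau> - 1) * z0) + norm (\<i> * of_real \<sigma>)" by (rule norm_triangle_ineq)
    also have "\<dots> = \<bar>\<tau> - 1\<bar> * norm z0 + \<bar>\<sigma>\<bar>" by (simp only: norm_mult norm_of_real norm_ii)
    also have "\<dots> \<le> \<bar>\<tau> - 1\<bar> * r + \<bar>\<sigma>\<bar>" using z0 by (simp add: mult_left_mono)
    finally show ?thesis .
  qed
  let ?M = "cstar A1 ** A2"
  have Mv: "?M *v v - v = cstar A1 *v ((A2 - A1) *v v)"
  proof -
    have "v = cstar A1 *v (A1 *v v)" using assms(1)
      by (simp add: matrix_vector_mul_assoc unitary_def)
    then have "?M *v v - v = cstar A1 *v (A2 *v v) - cstar A1 *v (A1 *v v)"
      by (simp add: matrix_vector_mul_assoc)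
    also have "\<dots> = cstar A1 *v ((A2 - A1) *v v)"
      by (simp add: matrix_vector_mult_diff_distrib matrix_vector_mult_diff_rdistrib)
    finally show ?thesis .
  qed
  have d2: "dist (sqrt \<tau> *\<^sub>R (?M *v v)) v \<le> \<bar>sqrt \<tau> - 1\<bar> * r + real (CARD('n))^2 * norm (A2 - A1) * r"
  proof -
    have um: "unitary ?M" using assms(1,2) unitary_cstar unitary_mult by blast
    have "dist (sqrt \<tau> *\<^sub>R (?M *v v)) v = norm ((sqrt \<tau> - 1) *\<^sub>R (?M *v v) + (?M *v v - v))"
      by (simp add: dist_norm algebra_simps)
    also have "\<dots> \<le> norm ((sqrt \<tau> - 1) *\<^sub>R (?M *v v)) + norm (?M *v v - v)" by (rule norm_triangle_ineq)
    also have "\<dots> = \<bar>sqrt \<tau> - 1\<bar> * norm v + norm ((A2 - A1) *v v)"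
      using um unitary_norm[OF unitary_cstar[OF assms(1)]] by (simp add: Mv unitary_norm)
    also have "\<dots> \<le> \<bar>sqrt \<tau> - 1\<bar> * r + real (CARD('n))^2 * norm (A2 - A1) * r"
    proof -
      have "norm ((A2 - A1) *v v) \<le> real (CARD('n))^2 * norm (A2 - A1) * norm v" by (rule MV)
      also have "\<dots> \<le> real (CARD('n))^2 * norm (A2 - A1) * r" using v by (simp add: mult_left_mono)
      finally show ?thesis using v by (simp add: mult_left_mono add_mono)
    qed
    finally show ?thesis .
  qed
  show ?thesis using Pair dist_pair_le[of "of_real \<tau> * z0 + \<i> * of_real \<sigma>" "sqrt \<tau> *\<^sub>R (?M *v v)" z0 v] d1 d2
    by (simp add: Fm_simp)
qed


lemma DISC:
  fixes \<gamma> :: "nat \<Rightarrow> ('n::finite pt \<Rightarrow> 'n pt)" and \<Gamma> :: "('n pt \<Rightarrow> 'n pt) set"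
    and A :: "nat \<Rightarrow> complex^'n^'n"
  assumes d: "discrete_subgroup \<Theta> \<Gamma>"
    and g: "\<And>\<nu>. \<gamma> \<nu> \<in> \<Gamma>" "\<And>\<nu>. R (\<gamma> \<nu>) (t \<nu>) (s \<nu>) (A \<nu>)"
    and tl: "t \<longlonglongrightarrow> T" "T > 0" and sl: "s \<longlonglongrightarrow> S" and ne: "\<And>\<nu>. s \<nu> \<noteq> S"
  shows False
proof -
  have sub: "subgroup_Aut \<Theta> \<Gamma>" using d by (simp add: discrete_subgroup_def)
  have idG: "id \<in> \<Gamma>" using sub by (simp add: subgroup_Aut_def)
  obtain W where W: "co_open W" "W \<inter> \<Gamma> = {id}" using d idG by (auto simp: discrete_subgroup_def)
  have tp: "\<And>\<nu>. t \<nu> > 0" and uA: "\<And>\<nu>. unitary (A \<nu>)" using g(2) by (auto simp: R_def)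
  have "bounded (range A)"
    unfolding bounded_iff using unitary_bound[OF uA] by blast
  then obtain B r where r: "strict_mono r" "(A \<circ> r) \<longlonglongrightarrow> B"
    using bounded_imp_convergent_subsequence by blast
  define t' where "t' = t \<circ> r"
  define s' where "s' = s \<circ> r"
  define A' where "A' = A \<circ> r"
  define \<gamma>' where "\<gamma>' = \<gamma> \<circ> r"
  have t'l: "t' \<longlonglongrightarrow> T" unfolding t'_def using LIMSEQ_subseq_LIMSEQ[OF tl(1) r(1)] .
  have s'l: "s' \<longlonglongrightarrow> S" unfolding s'_def using LIMSEQ_subseq_LIMSEQ[OF sl r(1)] .
  have A'l: "A' \<longlonglongrightarrow> B" unfolding A'_def using r(2) .
  have ex: "\<exists>m\<ge>\<nu>. s' m \<noteq> s' \<nu>" for \<nu>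
  proof -
    have e: "\<bar>s' \<nu> - S\<bar> > 0" using ne by (simp add: s'_def)
    have "eventually (\<lambda>m. dist (s' m) S < \<bar>s' \<nu> - S\<bar>) sequentially"
      using s'l e by (rule tendstoD)
    then obtain N where N: "\<And>m. m \<ge> N \<Longrightarrow> dist (s' m) S < \<bar>s' \<nu> - S\<bar>"
      by (auto simp: eventually_sequentially)
    have "dist (s' (max N \<nu>)) S < \<bar>s' \<nu> - S\<bar>" using N by simp
    then have "s' (max N \<nu>) \<noteq> s' \<nu>" by (auto simp: dist_real_def)
    then show ?thesis by (metis max.cobounded2)
  qed
  then obtain b where b: "\<And>\<nu>. b \<nu> \<ge> \<nu>" "\<And>\<nu>. s' (b \<nu>) \<noteq> s' \<nu>" by metis
  have bl: "filterlim b sequentially sequentially"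
    unfolding filterlim_at_top eventually_sequentially using b(1) order_trans by blast
  have t'bl: "(\<lambda>\<nu>. t' (b \<nu>)) \<longlonglongrightarrow> T" using filterlim_compose[OF t'l bl] .
  have s'bl: "(\<lambda>\<nu>. s' (b \<nu>)) \<longlonglongrightarrow> S" using filterlim_compose[OF s'l bl] .
  have A'bl: "(\<lambda>\<nu>. A' (b \<nu>)) \<longlonglongrightarrow> B" using filterlim_compose[OF A'l bl] .
  have Rg': "R (\<gamma>' \<nu>) (t' \<nu>) (s' \<nu>) (A' \<nu>)" "\<gamma>' \<nu> \<in> \<Gamma>" for \<nu>
    using g by (auto simp: \<gamma>'_def t'_def s'_def A'_def)
  have "\<exists>h\<in>\<Gamma>. R h ((1/t' \<nu>) * t' (b \<nu>)) ((1/t' \<nu>) * s' (b \<nu>) + (- s' \<nu> / t' \<nu>))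
                       (cstar (A' \<nu>) ** A' (b \<nu>))" for \<nu>
  proof -
    obtain \<psi> where "\<psi> \<in> \<Gamma>" "R \<psi> (1/t' \<nu>) (- s' \<nu> / t' \<nu>) (cstar (A' \<nu>))"
      using G2[OF sub Rg'(2) Rg'(1)] by blast
    then show ?thesis using G1[OF sub _ Rg'(2)[of "b \<nu>"] _ Rg'(1)[of "b \<nu>"]] by blast
  qed
  then obtain h where h: "\<And>\<nu>. h \<nu> \<in> \<Gamma>"
    "\<And>\<nu>. R (h \<nu>) ((1/t' \<nu>) * t' (b \<nu>)) ((1/t' \<nu>) * s' (b \<nu>) + (- s' \<nu> / t' \<nu>))
                       (cstar (A' \<nu>) ** A' (b \<nu>))" by metis
  define \<tau> where "\<tau> \<nu> = (1/t' \<nu>) * t' (b \<nu>)" for \<nu>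
  define \<sigma> where "\<sigma> \<nu> = (1/t' \<nu>) * s' (b \<nu>) + (- s' \<nu> / t' \<nu>)" for \<nu>
  have \<tau>l: "\<tau> \<longlonglongrightarrow> 1"
  proof -
    have "\<tau> \<longlonglongrightarrow> (1/T) * T" unfolding \<tau>_def using tl(2) t'l t'bl by (intro tendsto_intros) auto
    then show ?thesis using tl(2) by simp
  qed
  have \<sigma>l: "\<sigma> \<longlonglongrightarrow> 0"
  proof -
    have "\<sigma> \<longlonglongrightarrow> (1/T) * S + (- S / T)" unfolding \<sigma>_def using tl(2) t'l s'l s'bl by (intro tendsto_intros) auto
    then show ?thesis by simp
  qed
  have sql: "(\<lambda>\<nu>. sqrt (\<tau> \<nu>)) \<longlonglongrightarrow> 1" using tendsto_real_sqrt[OF \<tau>l] by simp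
  have Al: "(\<lambda>\<nu>. norm (A' (b \<nu>) - A' \<nu>)) \<longlonglongrightarrow> 0"
  proof -
    have "(\<lambda>\<nu>. A' (b \<nu>) - A' \<nu>) \<longlonglongrightarrow> B - B" using A'bl A'l by (rule tendsto_diff)
    then show ?thesis using tendsto_norm_zero by simp
  qed
  have evW: "eventually (\<lambda>\<nu>. h \<nu> \<in> W) sequentially"
  proof (rule CO[OF W(1)])
    show "id \<in> W" using W(2) by blast
  next
    fix K :: "'n pt set" and e :: real
    assume K: "compact K" "K \<subseteq> siegel_H" "e > 0"
    obtain \<rho> where \<rho>: "\<rho> > 0" "\<forall>x\<in>K. norm x \<le> \<rho>"
      using compact_imp_bounded[OF K(1)] unfolding bounded_pos by blast
    define E where "E \<nu> = \<bar>\<tau> \<nu> - 1\<bar> * \<rho> + \<bar>\<sigma> \<nu>\<bar> + \<bar>sqrt (\<tau> \<nu>) - 1\<bar> * \<rho>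
        + real (CARD('n))^2 * norm (A' (b \<nu>) - A' \<nu>) * \<rho>" for \<nu>
    have "E \<longlonglongrightarrow> \<bar>1 - 1\<bar> * \<rho> + \<bar>0\<bar> + \<bar>1 - 1\<bar> * \<rho> + real (CARD('n))^2 * 0 * \<rho>"
      unfolding E_def using \<tau>l \<sigma>l sql Al by (intro tendsto_intros)
    then have "E \<longlonglongrightarrow> 0" by simp
    then have "eventually (\<lambda>\<nu>. E \<nu> < e) sequentially" using K(3) by (rule order_tendstoD)
    then show "eventually (\<lambda>\<nu>. \<forall>x\<in>K. dist (h \<nu> x) x < e) sequentially"
    proof (rule eventually_mono)
      fix \<nu> assume E: "E \<nu> < e"
      show "\<forall>x\<in>K. dist (h \<nu> x) x < e"
      proof
        fix x assume x: "x \<in> K"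
        have hx: "h \<nu> x = Fm (\<tau> \<nu>) (\<sigma> \<nu>) (cstar (A' \<nu>) ** A' (b \<nu>)) x"
          using h(2)[of \<nu>] x K(2) unfolding R_def \<tau>_def \<sigma>_def by blast
        have "\<tau> \<nu> > 0" using h(2)[of \<nu>] unfolding R_def \<tau>_def by blast
        then have "dist (h \<nu> x) x \<le> E \<nu>" unfolding hx E_def
          using BND[OF uA[of "r \<nu>"] uA[of "r (b \<nu>)"], where \<tau>="\<tau> \<nu>" and z=x and r=\<rho> and \<sigma>="\<sigma> \<nu>"] \<rho>(2) x
          by (simp add: A'_def)
        then show "dist (h \<nu> x) x < e" using E by simp
      qed
    qed
  qed
  then obtain \<nu> where "h \<nu> \<in> W" by (auto simp: eventually_sequentially)
  then have hid: "h \<nu> = id" using W(2) h(1)[of \<nu>] by blast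
  let ?z = "(-1 :: complex, 0 :: complex^'n)"
  have zH: "?z \<in> siegel_H" by (simp add: H_iff)
  have eqz: "Fm (\<tau> \<nu>) (\<sigma> \<nu>) (cstar (A' \<nu>) ** A' (b \<nu>)) ?z = ?z"
    using h(2)[of \<nu>] zH hid unfolding R_def \<tau>_def \<sigma>_def by (metis id_apply)
  have "\<sigma> \<nu> = Im (fst (Fm (\<tau> \<nu>) (\<sigma> \<nu>) (cstar (A' \<nu>) ** A' (b \<nu>)) ?z))"
    by (simp add: Fm_simp)
  also have "\<dots> = 0" unfolding eqz by simp
  finally have "\<sigma> \<nu> = 0" .
  then have "s' (b \<nu>) = s' \<nu>" using tp[of "r \<nu>"] unfolding \<sigma>_def t'_def
    by (simp add: field_simps)
  with b(2) show False by blast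
qed


lemma SEQ:
  fixes \<phi> :: "nat \<Rightarrow> ('n::finite pt \<Rightarrow> 'n pt)" and \<Gamma> :: "('n pt \<Rightarrow> 'n pt) set"
  assumes sub: "subgroup_Aut \<Theta> \<Gamma>" and inG: "\<forall>\<nu>. \<phi> \<nu> \<in> \<Gamma>" and pH: "p \<in> siegel_H"
    and lim: "(\<lambda>\<nu>. \<phi> \<nu> p) \<longlonglongrightarrow> (q, 0)" and Req: "Re q = 0"
  shows "\<exists>N t s A. (\<forall>\<nu>. R (\<phi> (\<nu>+N)) (t \<nu>) (s \<nu>) (A \<nu>)) \<and> t \<longlonglongrightarrow> 0 \<and> s \<longlonglongrightarrow> Im q"
proof -
  have "\<forall>\<nu>. \<exists>t s w A. t > 0 \<and> unitary A \<and> \<phi> \<nu> = Fa \<Theta> t s w A"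
  proof
    fix \<nu>
    have "\<phi> \<nu> \<in> Aut_H \<Theta>" using sub inG unfolding subgroup_Aut_def by blast
    then obtain t s w A where "t > 0" "unitary A" "\<phi> \<nu> = Fa \<Theta> t s w A" by (rule Aut_obtain)
    then show "\<exists>t s w A. t > 0 \<and> unitary A \<and> \<phi> \<nu> = Fa \<Theta> t s w A" by blast
  qed
  then obtain T S Wv Am where P: "\<And>\<nu>. T \<nu> > 0" "\<And>\<nu>. unitary (Am \<nu>)"
    "\<And>\<nu>. \<phi> \<nu> = Fa \<Theta> (T \<nu>) (S \<nu>) (Wv \<nu>) (Am \<nu>)" by metis
  obtain p0 p' where p: "p = (p0, p')" by (cases p)
  define c where "c = Re p0 + (norm p')^2"
  have c: "c < 0" using pH p by (simp add: H_iff c_def)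
  have Rp0: "Re p0 < 0" using c unfolding c_def by (smt (verit) zero_le_power2)
  have fL: "(\<lambda>\<nu>. fst (\<phi> \<nu> p)) \<longlonglongrightarrow> q" using tendsto_fst[OF lim] by simp
  have ReL: "(\<lambda>\<nu>. Re (fst (\<phi> \<nu> p))) \<longlonglongrightarrow> Re q" using tendsto_Re[OF fL] .
  have ImL: "(\<lambda>\<nu>. Im (fst (\<phi> \<nu> p))) \<longlonglongrightarrow> Im q" using tendsto_Im[OF fL] .
  have "eventually (\<lambda>\<nu>. Re (fst (\<phi> \<nu> p)) > c) sequentially"
    using ReL c Req by (intro order_tendstoD) auto
  then obtain N where N: "\<And>\<nu>. \<nu> \<ge> N \<Longrightarrow> Re (fst (\<phi> \<nu> p)) > c"
    by (auto simp: eventually_sequentially)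
  have W0: "Wv \<nu> = 0" if "\<nu> \<ge> N" for \<nu>
  proof (rule TW[OF sub _ P(1) P(2) P(3)])
    show "\<phi> \<nu> \<in> \<Gamma>" using inG by blast
    show "T \<nu> \<noteq> 1"
    proof
      assume T1: "T \<nu> = 1"
      let ?w = "Wv \<nu>"
      have "0 \<le> (norm (?w + p'))^2" by simp
      also have "\<dots> = (norm ?w)^2 + 2 * (p' \<bullet> ?w) + (norm p')^2"
        by (simp add: power2_norm_eq_inner inner_add_left inner_add_right inner_commute)
      finally have ineq: "- ((norm ?w)^2) - 2 * (p' \<bullet> ?w) \<le> (norm p')^2" by linarith
      have "Re (fst (\<phi> \<nu> p)) = Re p0 - ((norm ?w)^2) - 2 * (p' \<bullet> ?w)"
        using Re_fst_Fa[of \<Theta> "T \<nu>" "S \<nu>" ?w "Am \<nu>" p0 p'] T1 P(3)[of \<nu>] p by simp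
      then have "Re (fst (\<phi> \<nu> p)) \<le> c" using ineq unfolding c_def by linarith
      with N[OF that] show False by simp
    qed
  qed
  have Fm\<nu>: "\<phi> \<nu> = Fm (T \<nu>) (S \<nu>) (Am \<nu>)" if "\<nu> \<ge> N" for \<nu>
    using P(3)[of \<nu>] W0[OF that] by (simp add: Fa0)
  define t where "t \<nu> = Re (fst (\<phi> (\<nu>+N) p)) / Re p0" for \<nu>
  define s where "s \<nu> = Im (fst (\<phi> (\<nu>+N) p)) - t \<nu> * Im p0" for \<nu>
  have fstv: "fst (\<phi> (\<nu>+N) p) = complex_of_real (T (\<nu>+N)) * p0 + \<i> * complex_of_real (S (\<nu>+N))" for \<nu>
    using Fm\<nu>[of "\<nu>+N"] p by (simp add: Fm_simp)
  have tT: "t \<nu> = T (\<nu>+N)" for \<nu> using Rp0 unfolding t_def fstv by simp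
  have sS: "s \<nu> = S (\<nu>+N)" for \<nu> unfolding s_def tT fstv by simp
  have "\<forall>\<nu>. R (\<phi> (\<nu>+N)) (t \<nu>) (s \<nu>) (Am (\<nu>+N))"
    using P Fm\<nu> by (simp add: R_def tT sS)
  moreover have "t \<longlonglongrightarrow> 0"
  proof -
    have a: "(\<lambda>\<nu>. Re (fst (\<phi> (\<nu>+N) p))) \<longlonglongrightarrow> Re q"
      using LIMSEQ_ignore_initial_segment[OF ReL] .
    have "t \<longlonglongrightarrow> Re q / Re p0" unfolding t_def
      using tendsto_divide[OF a tendsto_const[of "Re p0"]] Rp0 by simp
    then show ?thesis using Req by simp
  qed
  moreover have "s \<longlonglongrightarrow> Im q"
  proof -
    have a: "(\<lambda>\<nu>. Im (fst (\<phi> (\<nu>+N) p))) \<longlonglongrightarrow> Im q"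
      using LIMSEQ_ignore_initial_segment[OF ImL] .
    have "s \<longlonglongrightarrow> Im q - 0 * Im p0" unfolding s_def
      using tendsto_diff[OF a tendsto_mult[OF \<open>t \<longlonglongrightarrow> 0\<close> tendsto_const]] .
    then show ?thesis by simp
  qed
  ultimately show ?thesis by (intro exI[of _ N] exI[of _ t] exI[of _ s] exI[of _ "\<lambda>\<nu>. Am (\<nu>+N)"]) simp
qed


lemma STEPC:
  fixes \<phi> :: "nat \<Rightarrow> ('n::finite pt \<Rightarrow> 'n pt)" and \<Gamma> :: "('n pt \<Rightarrow> 'n pt) set"
    and A :: "nat \<Rightarrow> complex^'n^'n"
  assumes d: "discrete_subgroup \<Theta> \<Gamma>" and inG: "\<forall>\<nu>. \<phi> \<nu> \<in> \<Gamma>"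
    and Rp: "\<forall>\<nu>. R (\<phi> \<nu>) (t \<nu>) (s \<nu>) (A \<nu>)" and tl: "t \<longlonglongrightarrow> 0" and sl: "s \<longlonglongrightarrow> \<sigma>1"
    and g: "g \<in> \<Gamma>" "R g \<tau> \<sigma> B"
  shows "\<exists>g1\<in>\<Gamma>. \<exists>B1. R g1 \<tau> ((1-\<tau>)*\<sigma>1) B1"
proof (rule ccontr)
  assume neg: "\<not> ?thesis"
  have sub: "subgroup_Aut \<Theta> \<Gamma>" using d by (simp add: discrete_subgroup_def)
  have "\<exists>c\<in>\<Gamma>. R c \<tau> ((1-\<tau>) * s \<nu> + t \<nu> * \<sigma>) (A \<nu> ** B ** cstar (A \<nu>))" for \<nu>
    using G3[OF sub _ g(1) _ g(2)] inG Rp by blast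
  then obtain ch where ch: "\<And>\<nu>. ch \<nu> \<in> \<Gamma>"
    "\<And>\<nu>. R (ch \<nu>) \<tau> ((1-\<tau>) * s \<nu> + t \<nu> * \<sigma>) (A \<nu> ** B ** cstar (A \<nu>))" by metis
  have \<tau>: "\<tau> > 0" using g(2) by (simp add: R_def)
  have lim: "(\<lambda>\<nu>. (1-\<tau>) * s \<nu> + t \<nu> * \<sigma>) \<longlonglongrightarrow> (1-\<tau>) * \<sigma>1 + 0 * \<sigma>"
    by (intro tendsto_intros sl tl)
  show False
  proof (rule DISC[OF d ch(1) ch(2) tendsto_const \<tau>])
    show "(\<lambda>\<nu>. (1-\<tau>) * s \<nu> + t \<nu> * \<sigma>) \<longlonglongrightarrow> (1-\<tau>) * \<sigma>1" using lim by simp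
    show "(1-\<tau>) * s \<nu> + t \<nu> * \<sigma> \<noteq> (1-\<tau>) * \<sigma>1" for \<nu>
      using neg ch by metis
  qed
qed

theorem mainTheorem4:
  fixes \<Theta> :: "complex ^ 'n::finite ^ 'n" and \<Gamma> :: "('n pt \<Rightarrow> 'n pt) set" and p :: "'n pt"
  assumes "skew \<Theta>" and "\<Theta> \<noteq> 0"
    and "discrete_subgroup \<Theta> \<Gamma>"
    and "p \<in> siegel_H"
  shows "\<forall>q1 q2. (Re q1 = 0 \<and> (\<exists>\<phi>::nat \<Rightarrow> ('n pt \<Rightarrow> 'n pt). (\<forall>\<nu>. \<phi> \<nu> \<in> \<Gamma>) \<and> inj \<phi>
                        \<and> (\<lambda>\<nu>. \<phi> \<nu> p) \<longlonglongrightarrow> (q1, 0)))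
              \<and> (Re q2 = 0 \<and> (\<exists>\<phi>::nat \<Rightarrow> ('n pt \<Rightarrow> 'n pt). (\<forall>\<nu>. \<phi> \<nu> \<in> \<Gamma>) \<and> inj \<phi>
                        \<and> (\<lambda>\<nu>. \<phi> \<nu> p) \<longlonglongrightarrow> (q2, 0)))
              \<longrightarrow> q1 = q2"
proof (intro allI impI)
  fix q1 q2 :: complex
  assume H: "(Re q1 = 0 \<and> (\<exists>\<phi>::nat \<Rightarrow> ('n pt \<Rightarrow> 'n pt). (\<forall>\<nu>. \<phi> \<nu> \<in> \<Gamma>) \<and> inj \<phi>
                        \<and> (\<lambda>\<nu>. \<phi> \<nu> p) \<longlonglongrightarrow> (q1, 0)))
              \<and> (Re q2 = 0 \<and> (\<exists>\<phi>::nat \<Rightarrow> ('n pt \<Rightarrow> 'n pt). (\<forall>\<nu>. \<phi> \<nu> \<in> \<Gamma>) \<and> inj \<phi>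
                        \<and> (\<lambda>\<nu>. \<phi> \<nu> p) \<longlonglongrightarrow> (q2, 0)))"
  have d: "discrete_subgroup \<Theta> \<Gamma>" by fact
  have sub: "subgroup_Aut \<Theta> \<Gamma>" using d by (simp add: discrete_subgroup_def)
  obtain \<phi>1 where p1: "\<forall>\<nu>. \<phi>1 \<nu> \<in> \<Gamma>" "(\<lambda>\<nu>. \<phi>1 \<nu> p) \<longlonglongrightarrow> (q1, 0)" using H by blast
  obtain \<phi>2 where p2: "\<forall>\<nu>. \<phi>2 \<nu> \<in> \<Gamma>" "(\<lambda>\<nu>. \<phi>2 \<nu> p) \<longlonglongrightarrow> (q2, 0)" using H by blast
  obtain N1 t1 s1 A1 where S1: "\<forall>\<nu>. R (\<phi>1 (\<nu>+N1)) (t1 \<nu>) (s1 \<nu>) (A1 \<nu>)" "t1 \<longlonglongrightarrow> 0" "s1 \<longlonglongrightarrow> Im q1"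
    using SEQ[OF sub p1(1) assms(4) p1(2)] H by blast
  obtain N2 t2 s2 A2 where S2: "\<forall>\<nu>. R (\<phi>2 (\<nu>+N2)) (t2 \<nu>) (s2 \<nu>) (A2 \<nu>)" "t2 \<longlonglongrightarrow> 0" "s2 \<longlonglongrightarrow> Im q2"
    using SEQ[OF sub p2(1) assms(4) p2(2)] H by blast
  have G1': "\<forall>\<nu>. \<phi>1 (\<nu>+N1) \<in> \<Gamma>" "\<forall>\<nu>. \<phi>2 (\<nu>+N2) \<in> \<Gamma>" using p1 p2 by auto
  have "eventually (\<lambda>\<nu>. t1 \<nu> < 1) sequentially" using S1(2) by (intro order_tendstoD) auto
  then obtain k where k: "t1 k < 1" by (auto simp: eventually_sequentially)
  define \<tau> where "\<tau> = t1 k"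
  have \<tau>: "\<tau> > 0" "\<tau> < 1" using S1(1) k by (auto simp: \<tau>_def R_def)
  have gk: "\<phi>1 (k+N1) \<in> \<Gamma>" "R (\<phi>1 (k+N1)) \<tau> (s1 k) (A1 k)" using G1' S1(1) by (auto simp: \<tau>_def)
  obtain g1 B1 where g1: "g1 \<in> \<Gamma>" "R g1 \<tau> ((1-\<tau>) * Im q1) B1"
    using STEPC[OF d G1'(1) S1(1) S1(2) S1(3) gk] by blast
  obtain g2 B2 where g2: "g2 \<in> \<Gamma>" "R g2 \<tau> ((1-\<tau>) * Im q2) B2"
    using STEPC[OF d G1'(2) S2(1) S2(2) S2(3) gk] by blast
  show "q1 = q2"
  proof (rule ccontr)
    assume ne: "q1 \<noteq> q2"
    have Im: "Im q1 \<noteq> Im q2" using ne H complex_eqI by metis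
    obtain \<psi> where \<psi>: "\<psi> \<in> \<Gamma>" "R \<psi> (1/\<tau>) (- ((1-\<tau>) * Im q1) / \<tau>) (cstar B1)"
      using G2[OF sub g1] by blast
    define \<delta> where "\<delta> = (1/\<tau>) * ((1-\<tau>) * Im q2) + (- ((1-\<tau>) * Im q1) / \<tau>)"
    have "\<exists>g\<in>\<Gamma>. R g 1 \<delta> (cstar B1 ** B2)"
      by (rule G1[OF sub \<psi>(1) g2(1) \<psi>(2) g2(2)]) (use \<tau> in \<open>auto simp: \<delta>_def\<close>)
    then obtain T0 where T0: "T0 \<in> \<Gamma>" "R T0 1 \<delta> (cstar B1 ** B2)" by blast
    have \<delta>0: "\<delta> \<noteq> 0"
    proof
      assume "\<delta> = 0"
      moreover have "\<delta> * \<tau> = (1-\<tau>) * (Im q2 - Im q1)" using \<tau> unfolding \<delta>_def by (simp add: field_simps)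
      ultimately have "(1-\<tau>) * (Im q2 - Im q1) = 0" by simp
      then show False using \<tau> Im by simp
    qed
    have "\<exists>c\<in>\<Gamma>. R c 1 ((1-1) * s1 \<nu> + t1 \<nu> * \<delta>) (A1 \<nu> ** (cstar B1 ** B2) ** cstar (A1 \<nu>))" for \<nu>
      using G3[OF sub _ T0(1) _ T0(2)] G1' S1(1) by blast
    then obtain ch where ch: "\<And>\<nu>. ch \<nu> \<in> \<Gamma>"
      "\<And>\<nu>. R (ch \<nu>) 1 ((1-1) * s1 \<nu> + t1 \<nu> * \<delta>) (A1 \<nu> ** (cstar B1 ** B2) ** cstar (A1 \<nu>))"
      by metis
    show False
    proof (rule DISC[OF d ch(1) ch(2) tendsto_const])
      show "(0::real) < 1" by simp
      have "(\<lambda>\<nu>. (1-1) * s1 \<nu> + t1 \<nu> * \<delta>) \<longlonglongrightarrow> (1-1) * Im q1 + 0 * \<delta>"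
        by (intro tendsto_intros S1(2) S1(3))
      then show "(\<lambda>\<nu>. (1-1) * s1 \<nu> + t1 \<nu> * \<delta>) \<longlonglongrightarrow> 0" by simp
      show "(1-1) * s1 \<nu> + t1 \<nu> * \<delta> \<noteq> 0" for \<nu>
        using S1(1) \<delta>0 unfolding R_def by (metis add_0 less_irrefl mult_eq_0_iff cancel_comm_monoid_add_class.diff_cancel)
    qed
  qed
qed

end
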